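(* Let $G$ be a multiplicatively written Abelian group, $\phi$ a height on $G$, $\alpha\in G$, and $0\le a<b\le\infty$. Then $(a,b)$ is uniform if and only if every point $t\in(a,b)$ is contained in some open interval $J\subseteq(a,b)$ which is uniform.
   Context: A height on $G$ is a map $\phi:G\to[0,\infty)$ with $\phi(e)=0$ and $\phi(\beta)=\phi(\beta^{-1})$. $\mathbb R^\infty$ is the set of finitely supported real sequences, $\|\mathbf x\|_t=(\sum_n|x_n|^t)^{1/t}$. $\phi_t(\alpha)=\inf\{(\sum_{n=1}^N\phi(\alpha_n)^t)^{1/t}:N\in\mathbb N,\ \alpha_n\in G,\ \alpha=\prod_{n=1}^N\alpha_n\}$. A set $K\subseteq(0,\infty)$ is uniform if there exists $\mathbf x\in\mathbb R^\infty$ with $\phi_t(\alpha)=\|\mathbf x\|_t$ for all $t\in K$. *)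

theory Defs
  imports "HOL-Analysis.Analysis"
begin

text \<open>Abelian group G: a type of class ab_group_add (group operation written additively,
  identity 0, inverse uminus). A height: nonnegative, zero at identity, symmetric.\<close>

definition is_height :: "('a::ab_group_add \<Rightarrow> real) \<Rightarrow> bool" where
  "is_height phi \<longleftrightarrow> phi 0 = 0 \<and> (\<forall>x. 0 \<le> phi x) \<and> (\<forall>x. phi x = phi (- x))"

definition phi_t :: "('a::ab_group_add \<Rightarrow> real) \<Rightarrow> real \<Rightarrow> 'a \<Rightarrow> real" where
  "phi_t phi t alpha = Inf {(\<Sum>x\<leftarrow>xs. phi x powr t) powr (1 / t) | xs. xs \<noteq> [] \<and> sum_list xs = alpha}"

definition fin_supp :: "(nat \<Rightarrow> real) \<Rightarrow> bool" where
  "fin_supp x \<longleftrightarrow> finite {n. x n \<noteq> 0}"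

definition tnorm :: "real \<Rightarrow> (nat \<Rightarrow> real) \<Rightarrow> real" where
  "tnorm t x = (\<Sum>n\<in>{n. x n \<noteq> 0}. \<bar>x n\<bar> powr t) powr (1 / t)"

definition uniform :: "('a::ab_group_add \<Rightarrow> real) \<Rightarrow> 'a \<Rightarrow> real set \<Rightarrow> bool" where
  "uniform phi alpha K \<longleftrightarrow> (\<exists>x. fin_supp x \<and> (\<forall>t\<in>K. phi_t phi t alpha = tnorm t x))"

definition ointv :: "ereal \<Rightarrow> ereal \<Rightarrow> real set" where
  "ointv a b = {t. a < ereal t \<and> ereal t < b}"

end

theory Submission imports Defs begin
lemma exp_sum_zero:
  fixes L :: "real set" and c :: "real \<Rightarrow> real"
  assumes "finite L" "u < v" "\<forall>t\<in>{u<..<v}. (\<Sum>l\<in>L. c l * exp (l*t)) = 0"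
  shows "\<forall>l\<in>L. c l = 0"
using assms proof (induction L arbitrary: c rule: finite_induct)
  case empty thus ?case by simp
next
  case (insert m F)
  define g where "g t = (\<Sum>l\<in>F. c l * exp ((l-m)*t))" for t
  have ee: "exp (l*t) * exp (-m*t) = exp ((l-m)*t)" for l t
    by (simp add: exp_add[symmetric] algebra_simps)
  have h: "c m + g t = 0" if "t \<in> {u<..<v}" for t
  proof -
    have "(\<Sum>l\<in>insert m F. c l * exp (l*t)) * exp(-m*t) = 0" using insert.prems that by simp
    also have "(\<Sum>l\<in>insert m F. c l * exp (l*t)) * exp(-m*t) = (\<Sum>l\<in>insert m F. c l * (exp (l*t) * exp(-m*t)))"
      by (simp add: sum_distrib_right mult.assoc)
    also have "\<dots> = (\<Sum>l\<in>insert m F. c l * exp ((l-m)*t))" by (simp only: ee)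
    finally show ?thesis using insert.hyps by (simp add: g_def)
  qed
  have deriv: "(g has_real_derivative (\<Sum>l\<in>F. c l * ((l-m) * exp((l-m)*t)))) (at t)" for t
    unfolding g_def by (auto intro!: derivative_eq_intros simp: algebra_simps)
  have d0: "(\<Sum>l\<in>F. (c l * (l-m)) * exp(l*t)) = 0" if t: "t\<in>{u<..<v}" for t
  proof -
    have "((\<lambda>_. - c m) has_real_derivative 0) (at t)" by simp
    then have "(g has_real_derivative 0) (at t)"
      by (rule has_field_derivative_transform_within_open[where S="{u<..<v}"]) (use t h in \<open>force+\<close>)
    then have "(\<Sum>l\<in>F. c l * ((l-m) * exp((l-m)*t))) = 0" using deriv DERIV_unique by blast
    then have "(\<Sum>l\<in>F. c l * ((l-m) * exp((l-m)*t))) * exp (m*t) = 0" by simp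
    moreover have "exp((l-m)*t) * exp (m*t) = exp (l*t)" for l by (simp add: exp_add[symmetric] algebra_simps)
    ultimately show ?thesis by (simp add: sum_distrib_right mult.assoc mult.left_commute)
  qed
  have cF: "\<forall>l\<in>F. c l = 0"
  proof
    fix l assume l: "l \<in> F"
    have "\<forall>l\<in>F. c l * (l-m) = 0" using insert.IH[of "\<lambda>l. c l * (l-m)"] insert.prems d0 by blast
    then show "c l = 0" using l insert.hyps by auto
  qed
  have "c m = 0" using h[of "(u+v)/2"] insert.prems cF by (simp add: g_def)
  then show ?case using cF by simp
qed
lemma F_repr:
  assumes "fin_supp x" "finite L" "(\<lambda>n. ln \<bar>x n\<bar>) ` {n. x n \<noteq> 0} \<subseteq> L"
  shows "(\<Sum>n\<in>{n. x n \<noteq> 0}. \<bar>x n\<bar> powr t) = (\<Sum>l\<in>L. real (card {n. x n \<noteq> 0 \<and> ln \<bar>x n\<bar> = l}) * exp (l*t))"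
proof -
  let ?S = "{n. x n \<noteq> 0}" and ?g = "\<lambda>n. ln \<bar>x n\<bar>"
  have fS: "finite ?S" using assms(1) by (simp add: fin_supp_def)
  have "(\<Sum>n\<in>?S. \<bar>x n\<bar> powr t) = (\<Sum>n\<in>?S. exp (?g n * t))"
    by (rule sum.cong) (auto simp: powr_def mult.commute)
  also have "\<dots> = (\<Sum>l\<in>?g ` ?S. \<Sum>n\<in>{n\<in>?S. ?g n = l}. exp (?g n * t))"
    by (rule sum.image_gen[OF fS])
  also have "\<dots> = (\<Sum>l\<in>?g ` ?S. real (card {n. x n \<noteq> 0 \<and> ln \<bar>x n\<bar> = l}) * exp (l*t))"
    by (rule sum.cong) auto
  also have "\<dots> = (\<Sum>l\<in>L. real (card {n. x n \<noteq> 0 \<and> ln \<bar>x n\<bar> = l}) * exp (l*t))"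
  proof (rule sum.mono_neutral_left[OF assms(2) assms(3)])
    show "\<forall>i\<in>L - ?g ` ?S. real (card {n. x n \<noteq> 0 \<and> ln \<bar>x n\<bar> = i}) * exp (i * t) = 0"
    proof
      fix i assume "i \<in> L - ?g ` ?S"
      then have "{n. x n \<noteq> 0 \<and> ln \<bar>x n\<bar> = i} = {}" by auto
      then show "real (card {n. x n \<noteq> 0 \<and> ln \<bar>x n\<bar> = i}) * exp (i * t) = 0" by (simp only: card.empty)
    qed
  qed
  finally show ?thesis .
qed

lemma tnorm_inj:
  assumes "0 < t" "tnorm t x = tnorm t y"
  shows "(\<Sum>n\<in>{n. x n \<noteq> 0}. \<bar>x n\<bar> powr t) = (\<Sum>n\<in>{n. y n \<noteq> 0}. \<bar>y n\<bar> powr t)"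
proof -
  have k: "(A powr (1/t)) powr t = A" if "A \<ge> 0" for A :: real
    using that assms(1) by (simp add: powr_powr)
  have "0 \<le> (\<Sum>n\<in>{n. x n \<noteq> 0}. \<bar>x n\<bar> powr t)" "0 \<le> (\<Sum>n\<in>{n. y n \<noteq> 0}. \<bar>y n\<bar> powr t)"
    by (auto intro: sum_nonneg)
  moreover have "((\<Sum>n\<in>{n. x n \<noteq> 0}. \<bar>x n\<bar> powr t) powr (1/t)) powr t = ((\<Sum>n\<in>{n. y n \<noteq> 0}. \<bar>y n\<bar> powr t) powr (1/t)) powr t"
    using assms(2) unfolding tnorm_def by simp
  ultimately show ?thesis using k by metis
qed

lemma tnorm_unique:
  fixes s :: real
  assumes "fin_supp x" "fin_supp y" "u < v" "\<forall>s\<in>{u<..<v}. 0 < s \<and> tnorm s x = tnorm s y"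
  shows "tnorm s x = tnorm s y"
proof -
  define L where "L = (\<lambda>n. ln \<bar>x n\<bar>) ` {n. x n \<noteq> 0} \<union> (\<lambda>n. ln \<bar>y n\<bar>) ` {n. y n \<noteq> 0}"
  have fL: "finite L" using assms(1,2) by (simp add: L_def fin_supp_def)
  define c where "c l = real (card {n. x n \<noteq> 0 \<and> ln \<bar>x n\<bar> = l}) - real (card {n. y n \<noteq> 0 \<and> ln \<bar>y n\<bar> = l})" for l
  have rep: "(\<Sum>n\<in>{n. x n \<noteq> 0}. \<bar>x n\<bar> powr t) - (\<Sum>n\<in>{n. y n \<noteq> 0}. \<bar>y n\<bar> powr t)
     = (\<Sum>l\<in>L. c l * exp (l*t))" for t
    using F_repr[OF assms(1) fL, of t] F_repr[OF assms(2) fL, of t]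
    by (simp add: L_def c_def sum_subtractf left_diff_distrib)
  have "\<forall>t\<in>{u<..<v}. (\<Sum>l\<in>L. c l * exp (l*t)) = 0"
  proof
    fix t assume "t \<in> {u<..<v}"
    then have "0 < t" "tnorm t x = tnorm t y" using assms(4) by auto
    from tnorm_inj[OF this] show "(\<Sum>l\<in>L. c l * exp (l*t)) = 0" using rep[of t] by simp
  qed
  then have c0: "\<forall>l\<in>L. c l = 0" using exp_sum_zero[OF fL assms(3)] by blast
  have "(\<Sum>l\<in>L. c l * exp (l * s)) = 0" using c0 by simp
  then have "(\<Sum>n\<in>{n. x n \<noteq> 0}. \<bar>x n\<bar> powr s) = (\<Sum>n\<in>{n. y n \<noteq> 0}. \<bar>y n\<bar> powr s)"
    using rep[of s] by simp
  then show ?thesis by (simp add: tnorm_def)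
qed

lemma open_ointv: "open (ointv c d)"
proof -
  have "ointv c d = ereal -` {c<..<d}" by (auto simp: ointv_def)
  then show ?thesis by (simp add: open_ereal_vimage)
qed

lemma connected_ointv: "connected (ointv c d)"
proof -
  have "is_interval (ointv c d)"
    unfolding is_interval_1 ointv_def
  proof (intro ballI allI impI)
    fix x y z assume "x \<in> {t. c < ereal t \<and> ereal t < d}" "y \<in> {t. c < ereal t \<and> ereal t < d}" "x \<le> z \<and> z \<le> y"
    then have "c < ereal x" "ereal y < d" "ereal x \<le> ereal z" "ereal z \<le> ereal y" by auto
    then show "z \<in> {t. c < ereal t \<and> ereal t < d}"
      using less_le_trans[of c "ereal x" "ereal z"] le_less_trans[of "ereal z" "ereal y" d] by blast
  qed
  then show ?thesis by (rule is_interval_connected)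
qed

lemma open_good:
  fixes I :: "real set" and P :: "real \<Rightarrow> (nat \<Rightarrow> real) \<Rightarrow> bool"
  shows "open {t. \<exists>e y. e > 0 \<and> ball t e \<subseteq> I \<and> Q y \<and> (\<forall>s\<in>ball t e. P s y)}"
  unfolding open_contains_ball
proof (intro ballI)
  fix t assume "t \<in> {t. \<exists>e y. e > 0 \<and> ball t e \<subseteq> I \<and> Q y \<and> (\<forall>s\<in>ball t e. P s y)}"
  then obtain e y where ey: "e > 0" "ball t e \<subseteq> I" "Q y" "\<forall>s\<in>ball t e. P s y" by blast
  have "ball t e \<subseteq> {t. \<exists>e y. e > 0 \<and> ball t e \<subseteq> I \<and> Q y \<and> (\<forall>s\<in>ball t e. P s y)}"
  proof
    fix t' assume t': "t' \<in> ball t e"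
    define e' where "e' = e - dist t t'"
    have "e' > 0" using t' by (simp add: e'_def dist_commute)
    moreover have "ball t' e' \<subseteq> ball t e"
    proof
      fix z assume "z \<in> ball t' e'"
      then show "z \<in> ball t e" using dist_triangle[of t z t'] by (simp add: e'_def)
    qed
    ultimately show "t' \<in> {t. \<exists>e y. e > 0 \<and> ball t e \<subseteq> I \<and> Q y \<and> (\<forall>s\<in>ball t e. P s y)}"
      using ey by blast
  qed
  then show "\<exists>e>0. ball t e \<subseteq> {t. \<exists>e y. e > 0 \<and> ball t e \<subseteq> I \<and> Q y \<and> (\<forall>s\<in>ball t e. P s y)}"
    using ey(1) by blast
qed

theorem lemma3p3:
  fixes phi :: "'a::ab_group_add \<Rightarrow> real" and alpha :: 'a and a :: real and b :: ereal
  assumes "is_height phi" and "0 \<le> a" and "ereal a < b"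
  shows "uniform phi alpha (ointv (ereal a) b) \<longleftrightarrow>
    (\<forall>t\<in>ointv (ereal a) b. \<exists>c d. t \<in> ointv c d \<and> ointv c d \<subseteq> ointv (ereal a) b
        \<and> uniform phi alpha (ointv c d))"
proof
  assume "uniform phi alpha (ointv (ereal a) b)"
  then show "\<forall>t\<in>ointv (ereal a) b. \<exists>c d. t \<in> ointv c d \<and> ointv c d \<subseteq> ointv (ereal a) b
        \<and> uniform phi alpha (ointv c d)" by blast
next
  assume H: "\<forall>t\<in>ointv (ereal a) b. \<exists>c d. t \<in> ointv c d \<and> ointv c d \<subseteq> ointv (ereal a) b
        \<and> uniform phi alpha (ointv c d)"
  define I where "I = ointv (ereal a) b"
  have pos: "s > 0" if "s \<in> I" for s using that assms(2) by (auto simp: I_def ointv_def)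
  have loc: "\<exists>e y. e > 0 \<and> ball t e \<subseteq> I \<and> fin_supp y \<and> (\<forall>s\<in>ball t e. phi_t phi s alpha = tnorm s y)"
    if t: "t \<in> I" for t
  proof -
    obtain c d where cd: "t \<in> ointv c d" "ointv c d \<subseteq> I" "uniform phi alpha (ointv c d)"
      using H t unfolding I_def by blast
    obtain y where y: "fin_supp y" "\<forall>s\<in>ointv c d. phi_t phi s alpha = tnorm s y"
      using cd(3) unfolding uniform_def by blast
    obtain e where e: "e > 0" "ball t e \<subseteq> ointv c d"
      using open_ointv cd(1) by (meson openE)
    show ?thesis using e y cd(2) by blast
  qed
  obtain t0 where t0: "ereal a < ereal t0" "ereal t0 < b" using ereal_dense2[OF assms(3)] by blast
  then have t0I: "t0 \<in> I" by (simp add: I_def ointv_def)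
  obtain e0 x0 where x0: "e0 > 0" "ball t0 e0 \<subseteq> I" "fin_supp x0"
      "\<forall>s\<in>ball t0 e0. phi_t phi s alpha = tnorm s x0"
    using loc[OF t0I] by blast
  define U where "U = {t. \<exists>e y. e > 0 \<and> ball t e \<subseteq> I \<and> (fin_supp y \<and> (\<forall>s>0. tnorm s y = tnorm s x0))
      \<and> (\<forall>s\<in>ball t e. phi_t phi s alpha = tnorm s y)}"
  define V where "V = {t. \<exists>e y. e > 0 \<and> ball t e \<subseteq> I \<and> (fin_supp y \<and> \<not>(\<forall>s>0. tnorm s y = tnorm s x0))
      \<and> (\<forall>s\<in>ball t e. phi_t phi s alpha = tnorm s y)}"
  have oU: "open U" unfolding U_def by (rule open_good)
  have oV: "open V" unfolding V_def by (rule open_good)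
  have disj: "U \<inter> V \<inter> I = {}"
  proof (rule ccontr)
    assume "U \<inter> V \<inter> I \<noteq> {}"
    then obtain t where "t \<in> U" "t \<in> V" by blast
    then obtain e1 y1 e2 y2 where A: "e1 > 0" "ball t e1 \<subseteq> I" "fin_supp y1" "\<forall>s>0. tnorm s y1 = tnorm s x0"
      "\<forall>s\<in>ball t e1. phi_t phi s alpha = tnorm s y1"
      and B: "e2 > 0" "ball t e2 \<subseteq> I" "fin_supp y2" "\<not>(\<forall>s>0. tnorm s y2 = tnorm s x0)"
      "\<forall>s\<in>ball t e2. phi_t phi s alpha = tnorm s y2"
      unfolding U_def V_def by blast
    define e where "e = min e1 e2"
    have "\<forall>s\<in>{t-e<..<t+e}. 0 < s \<and> tnorm s y1 = tnorm s y2"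
    proof
      fix s assume "s \<in> {t-e<..<t+e}"
      then have "s \<in> ball t e1" "s \<in> ball t e2" by (auto simp: e_def dist_real_def)
      then have s12: "s \<in> ball t e1" "s \<in> ball t e2" by auto
      have "phi_t phi s alpha = tnorm s y1" using A(5) s12(1) by blast
      moreover have "phi_t phi s alpha = tnorm s y2" using B(5) s12(2) by blast
      moreover have "s \<in> I" using A(2) s12(1) by blast
      ultimately have "phi_t phi s alpha = tnorm s y1" "phi_t phi s alpha = tnorm s y2" "s \<in> I" by auto
      then show "0 < s \<and> tnorm s y1 = tnorm s y2" using pos by auto
    qed
    moreover have "t - e < t + e" using A(1) B(1) by (simp add: e_def min_def)
    ultimately have "\<forall>s>0. tnorm s y1 = tnorm s y2"
      using tnorm_unique[OF A(3) B(3)] by metis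
    then show False using A(4) B(4) by auto
  qed
  have cov: "I \<subseteq> U \<union> V"
  proof
    fix t assume "t \<in> I"
    from loc[OF this] obtain e y where "e > 0 \<and> ball t e \<subseteq> I \<and> fin_supp y \<and> (\<forall>s\<in>ball t e. phi_t phi s alpha = tnorm s y)"
      by blast
    then show "t \<in> U \<union> V" unfolding U_def V_def by blast
  qed
  have "t0 \<in> U" unfolding U_def using x0 by (intro CollectI exI[of _ e0] exI[of _ x0]) auto
  then have "U \<inter> I \<noteq> {}" using t0I by blast
  then have "V \<inter> I = {}" using connectedD[OF connected_ointv[of "ereal a" b] oU oV] disj cov
    unfolding I_def by blast
  then have IU: "I \<subseteq> U" using cov by blast
  have "\<forall>t\<in>I. phi_t phi t alpha = tnorm t x0"
  proof
    fix t assume t: "t \<in> I"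
    then obtain e y where "e > 0" "fin_supp y" "\<forall>s>0. tnorm s y = tnorm s x0"
      "\<forall>s\<in>ball t e. phi_t phi s alpha = tnorm s y"
      using IU unfolding U_def by blast
    then show "phi_t phi t alpha = tnorm t x0" using pos[OF t] by auto
  qed
  then show "uniform phi alpha (ointv (ereal a) b)"
    unfolding uniform_def I_def using x0(3) by blast
qed
end
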